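(* Let $(X,u)$ and $(Y,v)$ be Čech closure spaces, let $Y^X$ be the set of all continuous maps $(X,u)\to(Y,v)$, let $(f_\lambda)_{\lambda\in\Lambda}$ be a net in $Y^X$ and $f\in Y^X$. Then $(f_\lambda)$ converges continuously to $f$ if and only if $$\overline{\lim_{\Lambda}}\, f_\lambda^{-1}(B)\subset f^{-1}(v(B))\quad\text{for every subset } B\subset Y.$$
   Context: A Čech closure space $(X,u)$ is a set $X$ with an operator $u:\mathcal P(X)\to\mathcal P(X)$ satisfying $u(\emptyset)=\emptyset$, $A\subset u(A)$, and $u(A\cup B)=u(A)\cup u(B)$. The interior is $\mathrm{int}_u A=X\setminus u(X\setminus A)$; $U$ is a neighbourhood of $x$ if $x\in\mathrm{int}_uU$. A map $f:(X,u)\to(Y,v)$ is continuous if $f(u(A))\subset v(f(A))$ for all $A\subset X$. A net $(x_\mu)_{\mu\in M}$ converges to $x$ if for every neighbourhood $U$ of $x$ there is $\mu_0$ with $x_\mu\in U$ for all $\mu\ge\mu_0$. A net $(f_\lambda)_{\lambda\in\Lambda}$ in $Y^X$ converges continuously to $f\in Y^X$ if, whenever a net $(x_\mu)_{\mu\in M}$ converges to $x$ in $(X,u)$, the net $(f_\lambda(x_\mu))_{(\lambda,\mu)\in\Lambda\times M}$ (coordinatewise order) converges to $f(x)$ in $(Y,v)$. For a net $(A_\lambda)_{\lambda\in\Lambda}$ of subsets of $X$, its upper limit $\overline{\lim_{\Lambda}}A_\lambda$ is the set of all $x\in X$ such that for every $\lambda_0\in\Lambda$ and every neighbourhood $U$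 of $x$ there is $\lambda\ge\lambda_0$ with $A_\lambda\cap U\ne\emptyset$. *)

theory Defs
  imports Main
begin

text \<open>Cech closure space on the carrier type 'a (the set X is the whole type).\<close>
definition cech_closure :: "('a set \<Rightarrow> 'a set) \<Rightarrow> bool" where
  "cech_closure u \<longleftrightarrow> u {} = {} \<and> (\<forall>A. A \<subseteq> u A) \<and> (\<forall>A B. u (A \<union> B) = u A \<union> u B)"

definition cl_interior :: "('a set \<Rightarrow> 'a set) \<Rightarrow> 'a set \<Rightarrow> 'a set" where
  "cl_interior u A = - u (- A)"

definition is_nbhd :: "('a set \<Rightarrow> 'a set) \<Rightarrow> 'a set \<Rightarrow> 'a \<Rightarrow> bool" where
  "is_nbhd u U x \<longleftrightarrow> x \<in> cl_interior u U"

definition cl_continuous :: "('a set \<Rightarrow> 'a set) \<Rightarrow> ('b set \<Rightarrow> 'b set) \<Rightarrow> ('a \<Rightarrow> 'b) \<Rightarrow> bool" where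
  "cl_continuous u v f \<longleftrightarrow> (\<forall>A. f ` u A \<subseteq> v (f ` A))"

definition directed :: "'i set \<Rightarrow> ('i \<Rightarrow> 'i \<Rightarrow> bool) \<Rightarrow> bool" where
  "directed I le \<longleftrightarrow> I \<noteq> {} \<and> (\<forall>i\<in>I. le i i)
     \<and> (\<forall>i\<in>I. \<forall>j\<in>I. \<forall>k\<in>I. le i j \<and> le j k \<longrightarrow> le i k)
     \<and> (\<forall>i\<in>I. \<forall>j\<in>I. \<exists>k\<in>I. le i k \<and> le j k)"

definition net_conv :: "('a set \<Rightarrow> 'a set) \<Rightarrow> 'i set \<Rightarrow> ('i \<Rightarrow> 'i \<Rightarrow> bool) \<Rightarrow> ('i \<Rightarrow> 'a) \<Rightarrow> 'a \<Rightarrow> bool" where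
  "net_conv u M le xs x \<longleftrightarrow>
     (\<forall>U. is_nbhd u U x \<longrightarrow> (\<exists>m0\<in>M. \<forall>m\<in>M. le m0 m \<longrightarrow> xs m \<in> U))"

definition prod_le :: "('i \<Rightarrow> 'i \<Rightarrow> bool) \<Rightarrow> ('j \<Rightarrow> 'j \<Rightarrow> bool) \<Rightarrow> 'i \<times> 'j \<Rightarrow> 'i \<times> 'j \<Rightarrow> bool" where
  "prod_le le1 le2 p q \<longleftrightarrow> le1 (fst p) (fst q) \<and> le2 (snd p) (snd q)"

text \<open>Continuous convergence, where the test nets (x_mu) range over all directed sets
  whose elements are taken from the index type 'm.\<close>
definition cont_conv :: "'m itself \<Rightarrow> ('a set \<Rightarrow> 'a set) \<Rightarrow> ('b set \<Rightarrow> 'b set) \<Rightarrow> 'l set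
    \<Rightarrow> ('l \<Rightarrow> 'l \<Rightarrow> bool) \<Rightarrow> ('l \<Rightarrow> 'a \<Rightarrow> 'b) \<Rightarrow> ('a \<Rightarrow> 'b) \<Rightarrow> bool" where
  "cont_conv _ u v L le fs f \<longleftrightarrow>
     (\<forall>(M::'m set) leM xs x. directed M leM \<and> net_conv u M leM xs x \<longrightarrow>
        net_conv v (L \<times> M) (prod_le le leM) (\<lambda>p. fs (fst p) (xs (snd p))) (f x))"

definition upper_limit :: "('a set \<Rightarrow> 'a set) \<Rightarrow> 'l set \<Rightarrow> ('l \<Rightarrow> 'l \<Rightarrow> bool) \<Rightarrow> ('l \<Rightarrow> 'a set) \<Rightarrow> 'a set" where
  "upper_limit u L le A = {x. \<forall>l0\<in>L. \<forall>U. is_nbhd u U x \<longrightarrow> (\<exists>l\<in>L. le l0 l \<and> A l \<inter> U \<noteq> {})}"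

end

theory Submission
  imports Defs
begin

lemma nbhd_univ: "cech_closure u \<Longrightarrow> is_nbhd u UNIV x"
  unfolding is_nbhd_def cl_interior_def cech_closure_def by simp

lemma nbhd_int: "cech_closure u \<Longrightarrow> is_nbhd u U x \<Longrightarrow> is_nbhd u V x \<Longrightarrow> is_nbhd u (U \<inter> V) x"
proof -
  assume c: "cech_closure u" and a: "is_nbhd u U x" "is_nbhd u V x"
  have "u (- U \<union> - V) = u (- U) \<union> u (- V)" using c unfolding cech_closure_def by blast
  then show ?thesis using a unfolding is_nbhd_def cl_interior_def by simp
qed

lemma nbhd_compl: "x \<notin> u B \<Longrightarrow> is_nbhd u (- B) x"
  unfolding is_nbhd_def cl_interior_def by simp

lemma nbhd_compl2: "is_nbhd u V x \<Longrightarrow> x \<notin> u (- V)"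
  unfolding is_nbhd_def cl_interior_def by simp

lemma fwd:
  fixes L :: "'l set" and x :: 'a and u :: "'a set \<Rightarrow> 'a set"
  assumes cu: "cech_closure u" and dL: "directed L le"
    and cc: "cont_conv TYPE('l \<times> 'a set) u v L le fs f"
    and x: "x \<in> upper_limit u L le (\<lambda>l. fs l -` B)"
  shows "f x \<in> v B"
proof (rule ccontr)
  assume nf: "f x \<notin> v B"
  define M :: "('l \<times> 'a set) set" where "M = {p. fst p \<in> L \<and> is_nbhd u (snd p) x}"
  define leM :: "'l \<times> 'a set \<Rightarrow> 'l \<times> 'a set \<Rightarrow> bool" where
    "leM = (\<lambda>p q. le (fst p) (fst q) \<and> snd q \<subseteq> snd p)"
  define P where "P = (\<lambda>p q. fst q \<in> L \<and> le (fst p) (fst q) \<and> snd q \<in> snd p \<and> fs (fst q) (snd q) \<in> B)"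
  define g where "g = (\<lambda>p. SOME q. P p q)"
  define xs where "xs = (\<lambda>p. snd (g p))"
  have gP: "P p (g p)" if "p \<in> M" for p
  proof -
    from that x have "\<exists>l\<in>L. le (fst p) l \<and> (fs l -` B) \<inter> snd p \<noteq> {}"
      unfolding M_def upper_limit_def by auto
    then have "\<exists>q. P p q" unfolding P_def by auto
    then show ?thesis unfolding g_def by (rule someI_ex)
  qed
  from dL obtain l00 where l00: "l00 \<in> L" unfolding directed_def by auto
  have rf: "\<forall>i\<in>L. le i i" using dL unfolding directed_def by blast
  have tr: "\<forall>i\<in>L. \<forall>j\<in>L. \<forall>k\<in>L. le i j \<and> le j k \<longrightarrow> le i k"
    using dL unfolding directed_def by blast
  have ub: "\<forall>i\<in>L. \<forall>j\<in>L. \<exists>k\<in>L. le i k \<and> le j k" using dL unfolding directed_def by blast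
  have dM: "directed M leM"
    unfolding directed_def
  proof (intro conjI ballI impI)
    have "(l00, UNIV) \<in> M" using l00 nbhd_univ[OF cu] unfolding M_def by simp
    then show "M \<noteq> {}" by blast
  next
    fix i assume "i \<in> M" then have "fst i \<in> L" unfolding M_def by simp
    then show "leM i i" using rf unfolding leM_def by simp
  next
    fix i j k assume "i \<in> M" "j \<in> M" "k \<in> M" "leM i j \<and> leM j k"
    then have "fst i \<in> L" "fst j \<in> L" "fst k \<in> L" "le (fst i) (fst j)" "le (fst j) (fst k)"
      "snd k \<subseteq> snd j" "snd j \<subseteq> snd i" unfolding M_def leM_def by simp_all
    then show "leM i k" using tr unfolding leM_def by blast
  next
    fix i j assume i: "i \<in> M" and j: "j \<in> M"
    then have "fst i \<in> L" "fst j \<in> L" unfolding M_def by simp_all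
    then obtain k where k: "k \<in> L" "le (fst i) k" "le (fst j) k"
      using ub by blast
    have "is_nbhd u (snd i \<inter> snd j) x" using i j nbhd_int[OF cu] unfolding M_def by simp
    then have "(k, snd i \<inter> snd j) \<in> M" using k unfolding M_def by simp
    moreover have "leM i (k, snd i \<inter> snd j)" "leM j (k, snd i \<inter> snd j)"
      using k unfolding leM_def by auto
    ultimately show "\<exists>k\<in>M. leM i k \<and> leM j k" by blast
  qed
  have nc: "net_conv u M leM xs x"
    unfolding net_conv_def
  proof (intro allI impI)
    fix U assume U: "is_nbhd u U x"
    show "\<exists>m0\<in>M. \<forall>m\<in>M. leM m0 m \<longrightarrow> xs m \<in> U"
    proof (intro bexI[of _ "(l00, U)"] ballI impI)
      show "(l00, U) \<in> M" using l00 U unfolding M_def by auto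
    next
      fix m assume "m \<in> M" "leM (l00, U) m"
      then show "xs m \<in> U" using gP[of m] unfolding xs_def P_def leM_def by auto
    qed
  qed
  have "net_conv v (L \<times> M) (prod_le le leM) (\<lambda>p. fs (fst p) (xs (snd p))) (f x)"
    using cc dM nc unfolding cont_conv_def by (elim allE[of _ M] allE[of _ leM] allE[of _ xs] allE[of _ x]) simp
  moreover have "is_nbhd v (- B) (f x)" using nf by (rule nbhd_compl)
  ultimately have "\<exists>p0\<in>L \<times> M. \<forall>p\<in>L \<times> M. prod_le le leM p0 p \<longrightarrow> fs (fst p) (xs (snd p)) \<in> - B"
    unfolding net_conv_def by (elim allE[of _ "- B"]) simp
  then obtain p0 where p0: "p0 \<in> L \<times> M"
    and H: "\<forall>p\<in>L \<times> M. prod_le le leM p0 p \<longrightarrow> fs (fst p) (xs (snd p)) \<in> - B"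
    by blast
  obtain l0 l1 U1 where p0e: "p0 = (l0, (l1, U1))" by (cases p0) auto
  from p0 p0e have l0: "l0 \<in> L" and l1: "l1 \<in> L" and U1: "is_nbhd u U1 x"
    unfolding M_def by auto
  obtain l2 where l2: "l2 \<in> L" "le l0 l2" "le l1 l2" using ub l0 l1 by blast
  define m where "m = (l2, U1)"
  have mM: "m \<in> M" using l2 U1 unfolding m_def M_def by auto
  have Pm: "P m (g m)" using gP[OF mM] .
  define l' where "l' = fst (g m)"
  have l'L: "l' \<in> L" and l2l': "le l2 l'" and inB: "fs l' (xs m) \<in> B"
    using Pm unfolding P_def l'_def xs_def m_def by auto
  have "le l0 l'" using tr l0 l2 l'L l2l' by blast
  moreover have "leM (l1, U1) m" using l2 unfolding leM_def m_def by auto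
  ultimately have "prod_le le leM p0 (l', m)" unfolding prod_le_def p0e by auto
  with H l'L mM have "fs l' (xs m) \<in> - B" by fastforce
  with inB show False by auto
qed

lemma bwd:
  assumes UL: "\<forall>B. upper_limit u L le (\<lambda>l. fs l -` B) \<subseteq> f -` v B"
  shows "cont_conv TYPE('m) u v L le fs f"
  unfolding cont_conv_def
proof (intro allI impI)
  fix M :: "'m set" and leM xs x
  assume a: "directed M leM \<and> net_conv u M leM xs x"
  show "net_conv v (L \<times> M) (prod_le le leM) (\<lambda>p. fs (fst p) (xs (snd p))) (f x)"
    unfolding net_conv_def
  proof (intro allI impI, rule ccontr)
    fix V assume V: "is_nbhd v V (f x)"
      and neg: "\<not> (\<exists>m0\<in>L \<times> M. \<forall>m\<in>L \<times> M. prod_le le leM m0 m \<longrightarrow> fs (fst m) (xs (snd m)) \<in> V)"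
    have "x \<in> upper_limit u L le (\<lambda>l. fs l -` (- V))"
      unfolding upper_limit_def
    proof (intro CollectI ballI allI impI)
      fix l0 U assume l0: "l0 \<in> L" and U: "is_nbhd u U x"
      have nc: "net_conv u M leM xs x" using a by (rule conjunct2)
      have "\<exists>m0\<in>M. \<forall>m\<in>M. leM m0 m \<longrightarrow> xs m \<in> U"
        using nc U unfolding net_conv_def by (elim allE[of _ U]) simp
      then obtain m0 where m0: "m0 \<in> M" "\<forall>m\<in>M. leM m0 m \<longrightarrow> xs m \<in> U" by (elim bexE) simp
      have lm: "(l0, m0) \<in> L \<times> M" using l0 m0(1) by simp
      have "\<exists>p. p \<in> L \<times> M \<and> prod_le le leM (l0, m0) p \<and> fs (fst p) (xs (snd p)) \<notin> V"
      proof (rule ccontr)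
        assume h0: "\<not> (\<exists>p. p \<in> L \<times> M \<and> prod_le le leM (l0, m0) p \<and> fs (fst p) (xs (snd p)) \<notin> V)"
        have "\<forall>p\<in>L \<times> M. prod_le le leM (l0, m0) p \<longrightarrow> fs (fst p) (xs (snd p)) \<in> V"
        proof (intro ballI impI)
          fix p assume "p \<in> L \<times> M" "prod_le le leM (l0, m0) p"
          then show "fs (fst p) (xs (snd p)) \<in> V" using h0 by blast
        qed
        then have "\<exists>m0\<in>L \<times> M. \<forall>m\<in>L \<times> M. prod_le le leM m0 m \<longrightarrow> fs (fst m) (xs (snd m)) \<in> V"
          by (rule bexI[OF _ lm])
        with neg show False by (rule notE)
      qed
      then obtain p where p: "p \<in> L \<times> M" "prod_le le leM (l0, m0) p"
        "fs (fst p) (xs (snd p)) \<notin> V" by (elim exE conjE) simp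
      obtain l' m' where pe: "p = (l', m')" by (cases p) simp
      have "l' \<in> L" "m' \<in> M" "le l0 l'" "leM m0 m'" "fs l' (xs m') \<notin> V"
        using p unfolding pe prod_le_def by simp_all
      then have "xs m' \<in> U" "l' \<in> L" "le l0 l'" "xs m' \<in> fs l' -` (- V)" using m0(2) by simp_all
      then show "\<exists>l\<in>L. le l0 l \<and> fs l -` (- V) \<inter> U \<noteq> {}" by blast
    qed
    then have "f x \<in> v (- V)" using subsetD[OF spec[OF UL, of "- V"]] by simp
    with nbhd_compl2[OF V] show False by simp
  qed
qed

theorem theorem3:
  fixes u :: "'a set \<Rightarrow> 'a set" and v :: "'b set \<Rightarrow> 'b set"
    and L :: "'l set" and le :: "'l \<Rightarrow> 'l \<Rightarrow> bool"
    and fs :: "'l \<Rightarrow> 'a \<Rightarrow> 'b" and f :: "'a \<Rightarrow> 'b"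
  assumes "cech_closure u" and "cech_closure v"
    and "directed L le"
    and "\<forall>l\<in>L. cl_continuous u v (fs l)"
    and "cl_continuous u v f"
  shows "(cont_conv TYPE('m) u v L le fs f \<and> cont_conv TYPE('l \<times> 'a set) u v L le fs f)
     \<longleftrightarrow> (\<forall>B. upper_limit u L le (\<lambda>l. fs l -` B) \<subseteq> f -` v B)"
proof
  assume "cont_conv TYPE('m) u v L le fs f \<and> cont_conv TYPE('l \<times> 'a set) u v L le fs f"
  then have cc: "cont_conv TYPE('l \<times> 'a set) u v L le fs f" by (rule conjunct2)
  show "\<forall>B. upper_limit u L le (\<lambda>l. fs l -` B) \<subseteq> f -` v B"
  proof (intro allI subsetI)
    fix B x assume "x \<in> upper_limit u L le (\<lambda>l. fs l -` B)"
    then have "f x \<in> v B" by (rule fwd[OF assms(1) assms(3) cc])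
    then show "x \<in> f -` v B" by simp
  qed
next
  assume h: "\<forall>B. upper_limit u L le (\<lambda>l. fs l -` B) \<subseteq> f -` v B"
  show "cont_conv TYPE('m) u v L le fs f \<and> cont_conv TYPE('l \<times> 'a set) u v L le fs f"
    by (intro conjI; rule bwd[OF h])
qed

end
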